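(* Let $V$ be a vector space over an algebraically closed field of characteristic zero with $n=\dim V \ge 3$, and let $d\ge 2$. Suppose $H_d \subset \mathbb{P} V^* \simeq \mathbb{P}^{n-1}$ is a (not necessarily reduced) hypersurface of degree $d$ which is not a cone. Then a general hyperplane section $H_d \cap \mathbb{P}^{n-2}$ is not a cone. Equivalently, if $F\in S^d V$ is a concise polynomial in $n$ variables $x_1,\dots,x_n$ of degree $d \ge 2$, and $x_n = a_1 x_1 + \dotsb + a_{n-1} x_{n-1}$ is a general linear substitution, then $F'(x_1,\dots,x_{n-1})=F(x_1,\dots,x_{n-1}, a_1 x_1 + \dotsb + a_{n-1} x_{n-1})$ essentially depends on $n-1$ variables and no fewer.
   Context: A form $F\in S^dV$ is concise if there is no proper subspace $V'\subsetneq V$ with $F\in S^dV'$ (i.e., $F$ cannot be written in fewer variables after a linear change of coordinates); equivalently the hypersurface $V(F)$ is not a cone. A subscheme is a cone if it has a vertex, i.e., a point $p$ such that the union of lines joining $p$ to the subscheme is the subscheme itself (set-theoretically). *)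

theory Defs
  imports "HOL-Computational_Algebra.Polynomial"
begin

definition monoms :: "nat \<Rightarrow> nat \<Rightarrow> (nat \<Rightarrow> nat) set" where
  "monoms n d = {\<alpha>. (\<forall>i\<ge>n. \<alpha> i = 0) \<and> (\<Sum>i<n. \<alpha> i) = d}"

definition monoms_le :: "nat \<Rightarrow> nat \<Rightarrow> (nat \<Rightarrow> nat) set" where
  "monoms_le n D = {\<alpha>. (\<forall>i\<ge>n. \<alpha> i = 0) \<and> (\<Sum>i<n. \<alpha> i) \<le> D}"

text \<open>A form of degree d in n variables (an element of S^d V, dim V = n) is given by
  its coefficient function c on the monomials of degree d; coefficients outside
  monoms n d are ignored.  form_eval gives the associated polynomial function.\<close>

definition form_eval :: "nat \<Rightarrow> nat \<Rightarrow> ((nat \<Rightarrow> nat) \<Rightarrow> 'a::comm_ring_1) \<Rightarrow> (nat \<Rightarrow> 'a) \<Rightarrow> 'a" where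
  "form_eval n d c x = (\<Sum>\<alpha>\<in>monoms n d. c \<alpha> * (\<Prod>i<n. x i ^ \<alpha> i))"

definition poly_eval :: "nat \<Rightarrow> nat \<Rightarrow> ((nat \<Rightarrow> nat) \<Rightarrow> 'a::comm_ring_1) \<Rightarrow> (nat \<Rightarrow> 'a) \<Rightarrow> 'a" where
  "poly_eval n D p x = (\<Sum>\<alpha>\<in>monoms_le n D. p \<alpha> * (\<Prod>i<n. x i ^ \<alpha> i))"

text \<open>A degree-d polynomial function f in the n variables x_0..x_(n-1) is concise if
  it does not lie in S^d V' for a proper subspace V' (dim V' = m < n), i.e. it cannot
  be written as a degree-d form G in m < n variables evaluated at m linear forms
  L_j = sum_i L j i x_i in the original variables.\<close>

definition concise_fn :: "nat \<Rightarrow> nat \<Rightarrow> ((nat \<Rightarrow> 'a::comm_ring_1) \<Rightarrow> 'a) \<Rightarrow> bool" where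
  "concise_fn n d f \<longleftrightarrow>
     \<not> (\<exists>m<n. \<exists>(L :: nat \<Rightarrow> nat \<Rightarrow> 'a) (G :: (nat \<Rightarrow> nat) \<Rightarrow> 'a).
          \<forall>x. f x = form_eval m d G (\<lambda>j. \<Sum>i<n. L j i * x i))"

definition concise :: "nat \<Rightarrow> nat \<Rightarrow> ((nat \<Rightarrow> nat) \<Rightarrow> 'a::comm_ring_1) \<Rightarrow> bool" where
  "concise n d c \<longleftrightarrow> concise_fn n d (form_eval n d c)"

definition subst_last :: "nat \<Rightarrow> nat \<Rightarrow> ((nat \<Rightarrow> nat) \<Rightarrow> 'a::comm_ring_1) \<Rightarrow> (nat \<Rightarrow> 'a) \<Rightarrow> (nat \<Rightarrow> 'a) \<Rightarrow> 'a" where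
  "subst_last n d c a x = form_eval n d c (x(n - 1 := (\<Sum>i<n - 1. a i * x i)))"

end

theory Submission
  imports Defs "Jordan_Normal_Form.Determinant"
begin

inductive PF :: "nat \<Rightarrow> ((nat \<Rightarrow> 'a::comm_ring_1) \<Rightarrow> 'a) \<Rightarrow> bool" for m where
  PF_var: "i < m \<Longrightarrow> PF m (\<lambda>x. x i)"
| PF_const: "PF m (\<lambda>x. c)"
| PF_add: "PF m f \<Longrightarrow> PF m g \<Longrightarrow> PF m (\<lambda>x. f x + g x)"
| PF_mult: "PF m f \<Longrightarrow> PF m g \<Longrightarrow> PF m (\<lambda>x. f x * g x)"

lemma PF_sum: "finite A \<Longrightarrow> (\<And>a. a \<in> A \<Longrightarrow> PF m (f a)) \<Longrightarrow> PF m (\<lambda>x. \<Sum>a\<in>A. f a x)"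
  by (induction A rule: finite_induct) (auto intro: PF.intros)

lemma PF_prod: "finite A \<Longrightarrow> (\<And>a. a \<in> A \<Longrightarrow> PF m (f a)) \<Longrightarrow> PF m (\<lambda>x. \<Prod>a\<in>A. f a x)"
  by (induction A rule: finite_induct) (auto intro: PF.intros)

lemma PF_pow: "PF m f \<Longrightarrow> PF m (\<lambda>x. f x ^ k)"
  by (induction k) (auto intro: PF.intros)

lemma PF_neg: "PF m f \<Longrightarrow> PF m (\<lambda>x. - f x)"
  using PF_mult[OF PF_const[of m "-1"]] by fastforce

lemma PF_diff: "PF m f \<Longrightarrow> PF m g \<Longrightarrow> PF m (\<lambda>x. f x - g x)"
  using PF_add[OF _ PF_neg] by fastforce

lemma PF_local: "PF m f \<Longrightarrow> (\<And>i. i < m \<Longrightarrow> x i = y i) \<Longrightarrow> f x = f y"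
  by (induction rule: PF.induct) auto

lemma PF_comp: "PF m f \<Longrightarrow> (\<And>i. i < m \<Longrightarrow> PF k (h i)) \<Longrightarrow> PF k (\<lambda>a. f (\<lambda>i. h i a))"
  by (induction rule: PF.induct) (auto intro: PF.intros)

lemma finite_monoms_le: "finite (monoms_le m D)"
proof -
  have "monoms_le m D \<subseteq> {f. \<forall>x. (x \<in> {..<m} \<longrightarrow> f x \<in> {..D}) \<and> (x \<notin> {..<m} \<longrightarrow> f x = 0)}"
  proof
    fix \<alpha> assume a: "\<alpha> \<in> monoms_le m D"
    have "\<alpha> x \<le> D" if "x < m" for x
    proof -
      have "\<alpha> x \<le> (\<Sum>i<m. \<alpha> i)" using that by (intro member_le_sum) auto
      thus ?thesis using a by (auto simp: monoms_le_def)
    qed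
    thus "\<alpha> \<in> {f. \<forall>x. (x \<in> {..<m} \<longrightarrow> f x \<in> {..D}) \<and> (x \<notin> {..<m} \<longrightarrow> f x = 0)}"
      using a by (auto simp: monoms_le_def)
  qed
  thus ?thesis by (rule finite_subset) (intro finite_set_of_finite_funs, auto)
qed

lemma monoms_sub: "monoms m d \<subseteq> monoms_le m d"
  by (auto simp: monoms_def monoms_le_def)

lemma finite_monoms: "finite (monoms m d)"
  using finite_subset[OF monoms_sub finite_monoms_le] .

lemma PF_form_eval: "PF m (form_eval m d c)"
  unfolding form_eval_def
  by (intro PF_sum finite_monoms PF_mult PF_const PF_prod PF_pow PF_var) auto

lemma PF_poly_eval: "PF m (poly_eval m D c)"
  unfolding poly_eval_def
  by (intro PF_sum finite_monoms_le PF_mult PF_const PF_prod PF_pow PF_var) auto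

lemma poly_eval_extend:
  assumes "D \<le> D'"
  shows "poly_eval m D P x = poly_eval m D' (\<lambda>\<alpha>. if \<alpha> \<in> monoms_le m D then P \<alpha> else 0) x"
proof -
  have sub: "monoms_le m D \<subseteq> monoms_le m D'" using assms by (auto simp: monoms_le_def)
  show ?thesis unfolding poly_eval_def
    by (rule sum.mono_neutral_cong_left[OF finite_monoms_le sub]) auto
qed

lemma monoms_le_0: "monoms_le m 0 = {\<lambda>_. 0}"
proof -
  have "\<alpha> i = 0" if "\<alpha> \<in> monoms_le m 0" for \<alpha> i
  proof (cases "i < m")
    case True
    have "\<alpha> i \<le> (\<Sum>i<m. \<alpha> i)" using True by (intro member_le_sum) auto
    thus ?thesis using that by (auto simp: monoms_le_def)
  next
    case False thus ?thesis using that by (auto simp: monoms_le_def)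
  qed
  hence "\<alpha> \<in> monoms_le m 0 \<Longrightarrow> \<alpha> = (\<lambda>_. 0)" for \<alpha> by (simp add: fun_eq_iff)
  moreover have "(\<lambda>_. 0) \<in> monoms_le m 0" by (simp add: monoms_le_def)
  ultimately show ?thesis by blast
qed


lemma poly_eval_var:
  assumes "i < m"
  shows "poly_eval m 1 (\<lambda>\<alpha>. if \<alpha> = (\<lambda>j. if j = i then 1 else 0) then 1 else 0) x = (x i :: 'a::comm_ring_1)"
proof -
  let ?d = "(\<lambda>j. if j = i then 1 else 0) :: nat \<Rightarrow> nat"
  have mem: "?d \<in> monoms_le m 1" using assms unfolding monoms_le_def by simp
  have "poly_eval m 1 (\<lambda>\<alpha>. if \<alpha> = ?d then 1 else 0) x = (\<Prod>j<m. x j ^ ?d j)"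
  proof -
    have "poly_eval m 1 (\<lambda>\<alpha>. if \<alpha> = ?d then 1 else 0) x = (\<Sum>\<alpha>\<in>monoms_le m 1. if \<alpha> = ?d then (\<Prod>j<m. x j ^ \<alpha> j) else 0)"
      unfolding poly_eval_def by (intro sum.cong refl) simp
    also have "\<dots> = (\<Prod>j<m. x j ^ ?d j)" by (subst sum.delta[OF finite_monoms_le]) (simp only: mem if_True)
    finally show ?thesis .
  qed
  also have "\<dots> = (\<Prod>j<m. if j = i then x j else 1)" by (intro prod.cong) auto
  also have "\<dots> = x i" using assms by (simp add: prod.delta)
  finally show ?thesis .
qed

lemma poly_eval_mult:
  fixes P Q :: "(nat \<Rightarrow> nat) \<Rightarrow> 'a::comm_ring_1"
  shows "\<exists>R. \<forall>x. poly_eval m D1 P x * poly_eval m D2 Q x = poly_eval m (D1 + D2) R x"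
proof -
  let ?M1 = "monoms_le m D1" and ?M2 = "monoms_le m D2" and ?M = "monoms_le m (D1+D2)"
  let ?g = "\<lambda>(\<alpha>::nat\<Rightarrow>nat, \<beta>::nat\<Rightarrow>nat). (\<lambda>i. \<alpha> i + \<beta> i)"
  define R where "R \<gamma> = (\<Sum>p\<in>{p \<in> ?M1 \<times> ?M2. ?g p = \<gamma>}. P (fst p) * Q (snd p))" for \<gamma>
  have fin: "finite (?M1 \<times> ?M2)" using finite_monoms_le by auto
  have img: "?g ` (?M1 \<times> ?M2) \<subseteq> ?M"
    by (clarify, simp add: monoms_le_def sum.distrib add_mono)
  have "poly_eval m D1 P x * poly_eval m D2 Q x = poly_eval m (D1 + D2) R x" for x
  proof -
    have Xadd: "(\<Prod>i<m. x i ^ (\<alpha> i + \<beta> i)) = (\<Prod>i<m. x i ^ \<alpha> i) * (\<Prod>i<m. x i ^ \<beta> i)" for \<alpha> \<beta>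
      by (simp add: power_add prod.distrib)
    let ?X = "\<lambda>\<alpha>. \<Prod>i<m. x i ^ \<alpha> i"
    have "poly_eval m D1 P x * poly_eval m D2 Q x = (\<Sum>\<alpha>\<in>?M1. \<Sum>\<beta>\<in>?M2. (P \<alpha> * ?X \<alpha>) * (Q \<beta> * ?X \<beta>))"
      unfolding poly_eval_def by (simp add: sum_product)
    also have "\<dots> = (\<Sum>p\<in>?M1 \<times> ?M2. P (fst p) * Q (snd p) * ?X (?g p))"
      by (simp add: sum.cartesian_product case_prod_beta Xadd mult_ac)
    also have "\<dots> = (\<Sum>\<gamma>\<in>?M. \<Sum>p\<in>{p \<in> ?M1 \<times> ?M2. ?g p = \<gamma>}. P (fst p) * Q (snd p) * ?X (?g p))"
      by (rule sum.group[OF fin finite_monoms_le img, symmetric])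
    also have "\<dots> = (\<Sum>\<gamma>\<in>?M. R \<gamma> * ?X \<gamma>)"
      unfolding R_def sum_distrib_right by (rule sum.cong[OF refl], rule sum.cong[OF refl]) (simp split: prod.splits)
    finally show ?thesis unfolding poly_eval_def .
  qed
  thus ?thesis by blast
qed

lemma PF_repr: "PF m f \<Longrightarrow> \<exists>D P. \<forall>x. f x = poly_eval m D P x"
proof (induction rule: PF.induct)
  case (PF_var i)
  show ?case using poly_eval_var[OF PF_var, symmetric] by (intro exI allI) assumption
next
  case (PF_const c)
  have "poly_eval m 0 (\<lambda>_. c) x = c" for x
    unfolding poly_eval_def monoms_le_0 by simp
  thus ?case by (intro exI allI) (rule sym)
next
  case (PF_add f g)
  then obtain D1 P1 D2 P2 where f: "\<forall>x. f x = poly_eval m D1 P1 x" and g: "\<forall>x. g x = poly_eval m D2 P2 x"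
    by blast
  let ?D = "max D1 D2"
  let ?P1 = "\<lambda>\<alpha>. if \<alpha> \<in> monoms_le m D1 then P1 \<alpha> else 0"
  let ?P2 = "\<lambda>\<alpha>. if \<alpha> \<in> monoms_le m D2 then P2 \<alpha> else 0"
  have "f x + g x = poly_eval m ?D (\<lambda>\<alpha>. ?P1 \<alpha> + ?P2 \<alpha>) x" for x
  proof -
    have "poly_eval m ?D (\<lambda>\<alpha>. ?P1 \<alpha> + ?P2 \<alpha>) x = poly_eval m ?D ?P1 x + poly_eval m ?D ?P2 x"
      unfolding poly_eval_def by (simp add: distrib_right sum.distrib)
    thus ?thesis using f g poly_eval_extend[of D1 ?D m P1 x] poly_eval_extend[of D2 ?D m P2 x] by simp
  qed
  thus ?case by blast
next
  case (PF_mult f g)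
  then obtain D1 P1 D2 P2 where f: "\<forall>x. f x = poly_eval m D1 P1 x" and g: "\<forall>x. g x = poly_eval m D2 P2 x"
    by blast
  obtain R where "\<forall>x. poly_eval m D1 P1 x * poly_eval m D2 P2 x = poly_eval m (D1 + D2) R x"
    using poly_eval_mult by blast
  thus ?case using f g by (intro exI[of _ "D1+D2"] exI[of _ R]) simp
qed

lemma PF_line:
  assumes "PF m f" "\<And>i. i < m \<Longrightarrow> PF k (\<lambda>a. x a i)" "\<And>i. i < m \<Longrightarrow> PF k (\<lambda>a. w a i)"
  shows "\<exists>Q. (\<forall>a t. poly (Q a) t = f (\<lambda>i. x a i + t * w a i)) \<and> (\<forall>j. PF k (\<lambda>a. coeff (Q a) j))"
  using assms(1)
proof induction
  case (PF_var i)
  have "PF k (\<lambda>a. coeff [:x a i, w a i:] j)" for j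
  proof -
    consider "j = 0" | "j = 1" | "j > 1" by linarith
    thus ?thesis
    proof cases
      case 1 thus ?thesis using assms(2)[OF PF_var] by simp
    next
      case 2 thus ?thesis using assms(3)[OF PF_var] by simp
    next
      case 3 hence "j = Suc (Suc (j - 2))" by simp
      hence "coeff [:x a i, w a i:] j = 0" for a by (metis coeff_pCons_Suc coeff_0)
      thus ?thesis by (simp add: PF_const)
    qed
  qed
  thus ?case by (intro exI[of _ "\<lambda>a. [:x a i, w a i:]"]) (simp add: algebra_simps)
next
  case (PF_const c)
  have "PF k (\<lambda>a. coeff [:c:] j)" for j by (cases j) (simp_all add: PF.PF_const)
  thus ?case by (intro exI[of _ "\<lambda>a. [:c:]"]) simp
next
  case (PF_add f g)
  then obtain Q1 Q2 where Q1: "(\<forall>a t. poly (Q1 a) t = f (\<lambda>i. x a i + t * w a i)) \<and> (\<forall>j. PF k (\<lambda>a. coeff (Q1 a) j))"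
    and Q2: "(\<forall>a t. poly (Q2 a) t = g (\<lambda>i. x a i + t * w a i)) \<and> (\<forall>j. PF k (\<lambda>a. coeff (Q2 a) j))" by blast
  show ?case using Q1 Q2 by (intro exI[of _ "\<lambda>a. Q1 a + Q2 a"]) (simp add: PF.PF_add)
next
  case (PF_mult f g)
  then obtain Q1 Q2 where Q1: "(\<forall>a t. poly (Q1 a) t = f (\<lambda>i. x a i + t * w a i)) \<and> (\<forall>j. PF k (\<lambda>a. coeff (Q1 a) j))"
    and Q2: "(\<forall>a t. poly (Q2 a) t = g (\<lambda>i. x a i + t * w a i)) \<and> (\<forall>j. PF k (\<lambda>a. coeff (Q2 a) j))" by blast
  have "PF k (\<lambda>a. coeff (Q1 a * Q2 a) j)" for j
    unfolding coeff_mult using Q1 Q2 by (intro PF_sum PF.PF_mult) auto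
  thus ?case using Q1 Q2 by (intro exI[of _ "\<lambda>a. Q1 a * Q2 a"]) simp
qed

lemma poly_unique:
  fixes P Q :: "'a::{idom,ring_char_0} poly"
  assumes "\<And>t. poly P t = poly Q t" shows "P = Q"
proof -
  have "\<forall>t. poly (P - Q) t = 0" using assms by simp
  thus ?thesis using poly_all_0_iff_0 by (metis eq_iff_diff_eq_0)
qed

lemma poly_unique_nz:
  fixes P Q :: "'a::{field,ring_char_0} poly"
  assumes "\<And>t. t \<noteq> 0 \<Longrightarrow> poly P t = poly Q t" shows "P = Q"
proof (rule ccontr)
  assume "P \<noteq> Q"
  hence "P - Q \<noteq> 0" by simp
  hence fin: "finite {t. poly (P - Q) t = 0}" by (rule poly_roots_finite)
  have "UNIV - {0} \<subseteq> {t. poly (P - Q) t = 0}" using assms by auto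
  hence "finite (UNIV - {0::'a})" using fin finite_subset by blast
  thus False using infinite_UNIV_char_0[where 'a='a] by simp
qed

definition lr :: "((nat \<Rightarrow> 'a::field_char_0) \<Rightarrow> 'a) \<Rightarrow> (nat \<Rightarrow> 'a) \<Rightarrow> (nat \<Rightarrow> 'a) \<Rightarrow> 'a poly" where
  "lr f x w = (THE Q. \<forall>t. poly Q t = f (\<lambda>i. x i + t * w i))"

lemma lr_eq: "(\<And>t. poly Q t = f (\<lambda>i. x i + t * w i)) \<Longrightarrow> lr f x w = Q"
  unfolding lr_def by (rule the_equality) (auto intro: poly_unique)

lemma lr_ex: "PF m f \<Longrightarrow> \<exists>Q. \<forall>t. poly Q t = f (\<lambda>i. x i + t * w i)"
proof -
  assume f: "PF m f"
  have a: "PF 0 (\<lambda>a. x i)" "PF 0 (\<lambda>a. w i)" for i by (rule PF_const)+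
  show ?thesis using PF_line[of m f 0 "\<lambda>_. x" "\<lambda>_. w", OF f a] by blast
qed

lemma poly_lr: "PF m f \<Longrightarrow> poly (lr f x w) t = f (\<lambda>i. x i + t * (w i :: 'a::field_char_0))"
  using lr_ex[of m f x w] lr_eq by metis

lemma lr_coeff0: "PF m f \<Longrightarrow> coeff (lr f x w) 0 = f (x :: nat \<Rightarrow> 'a::field_char_0)"
  using poly_lr[of m f x w 0] by (simp add: poly_0_coeff_0)

definition Dir :: "((nat \<Rightarrow> 'a::field_char_0) \<Rightarrow> 'a) \<Rightarrow> (nat \<Rightarrow> 'a) \<Rightarrow> (nat \<Rightarrow> 'a) \<Rightarrow> 'a" where
  "Dir f x w = coeff (lr f x w) 1"

lemma D_lin:
  fixes f :: "(nat \<Rightarrow> 'a::field_char_0) \<Rightarrow> 'a"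
  assumes "PF m f"
  shows "Dir f x (\<lambda>i. w1 i + w2 i) = Dir f x w1 + Dir f x w2 \<and> Dir f x (\<lambda>i. c * w i) = c * Dir f x w"
  using assms
proof (induction arbitrary: w1 w2 w rule: PF.induct)
  case (PF_var i)
  have "lr (\<lambda>x. x i) x v = [:x i, v i:]" for v by (rule lr_eq) simp
  thus ?case by (simp add: Dir_def)
next
  case (PF_const c)
  have "lr (\<lambda>x. c) x v = [:c:]" for v by (rule lr_eq) simp
  thus ?case by (simp add: Dir_def)
next
  case (PF_add f g)
  have "lr (\<lambda>x. f x + g x) x v = lr f x v + lr g x v" for v
    by (rule lr_eq) (simp add: poly_lr[OF PF_add.hyps(1)] poly_lr[OF PF_add.hyps(2)])
  thus ?case using PF_add.IH by (simp add: Dir_def algebra_simps)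
next
  case (PF_mult f g)
  have "lr (\<lambda>x. f x * g x) x v = lr f x v * lr g x v" for v
    by (rule lr_eq) (simp add: poly_lr[OF PF_mult.hyps(1)] poly_lr[OF PF_mult.hyps(2)])
  hence *: "Dir (\<lambda>x. f x * g x) x v = f x * Dir g x v + Dir f x v * g x" for v
    by (simp add: Dir_def coeff_mult lr_coeff0[OF PF_mult.hyps(1)] lr_coeff0[OF PF_mult.hyps(2)])
  show ?case using PF_mult.IH by (simp add: * algebra_simps)
qed

lemma D_vertex:
  fixes f :: "(nat \<Rightarrow> 'a::field_char_0) \<Rightarrow> 'a"
  assumes "\<And>t. f (\<lambda>i. x i + t * w i) = f x"
  shows "Dir f x w = 0"
proof -
  have "lr f x w = [:f x:]" by (rule lr_eq) (simp add: assms)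
  thus ?thesis by (simp add: Dir_def)
qed

definition hom :: "nat \<Rightarrow> ((nat \<Rightarrow> 'a::comm_ring_1) \<Rightarrow> 'a) \<Rightarrow> bool" where
  "hom d f \<longleftrightarrow> (\<forall>c x. f (\<lambda>i. c * x i) = c ^ d * f x)"

lemma D_euler:
  fixes f :: "(nat \<Rightarrow> 'a::field_char_0) \<Rightarrow> 'a"
  assumes "hom d f"
  shows "Dir f q q = of_nat d * f q"
proof -
  have "lr f q q = Polynomial.smult (f q) ([:1, 1:] ^ d)"
  proof (rule lr_eq)
    fix t
    have "f (\<lambda>i. q i + t * q i) = f (\<lambda>i. (1 + t) * q i)" by (simp add: algebra_simps)
    also have "\<dots> = (1 + t) ^ d * f q" using assms by (simp add: hom_def)
    finally show "poly (Polynomial.smult (f q) ([:1, 1:] ^ d)) t = f (\<lambda>i. q i + t * q i)"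
      by (simp add: poly_power algebra_simps)
  qed
  moreover have "coeff ([:1, 1:] ^ d) 1 = (of_nat d :: 'a)"
  proof (cases d)
    case 0 thus ?thesis by simp
  next
    case (Suc d') thus ?thesis using coeff_linear_poly_power[of 1 d "1::'a" 1] by simp
  qed
  ultimately show ?thesis by (simp add: Dir_def)
qed

lemma pcomp_deriv: "coeff (p \<circ>\<^sub>p [:a, 1:]) 1 = poly (pderiv p) (a :: 'a::idom)"
proof (induction p)
  case 0 thus ?case by simp
next
  case (pCons b p)
  have "[:a, 1:] * (p \<circ>\<^sub>p [:a, 1:]) = Polynomial.smult a (p \<circ>\<^sub>p [:a, 1:]) + pCons 0 (p \<circ>\<^sub>p [:a, 1:])"
    by (simp add: mult_pCons_left)
  hence "coeff (pCons b p \<circ>\<^sub>p [:a, 1:]) 1 = a * coeff (p \<circ>\<^sub>p [:a, 1:]) 1 + coeff (p \<circ>\<^sub>p [:a, 1:]) 0"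
    by (simp add: pcompose_pCons)
  thus ?case using pCons by (simp add: coeff_pcompose_0 pderiv_pCons algebra_simps)
qed

lemma D_zero_const:
  fixes f :: "(nat \<Rightarrow> 'a::field_char_0) \<Rightarrow> 'a"
  assumes "PF m f" "\<And>y. Dir f y w = 0"
  shows "f (\<lambda>i. x i + t * w i) = f x"
proof -
  let ?Q = "lr f x w"
  have "poly (pderiv ?Q) t0 = 0" for t0
  proof -
    have "lr f (\<lambda>i. x i + t0 * w i) w = ?Q \<circ>\<^sub>p [:t0, 1:]"
    proof (rule lr_eq)
      fix t
      have "(\<lambda>i. x i + (t0 + t) * w i) = (\<lambda>i. x i + t0 * w i + t * w i)" by (simp add: algebra_simps)
      thus "poly (?Q \<circ>\<^sub>p [:t0, 1:]) t = f (\<lambda>i. x i + t0 * w i + t * w i)"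
        by (simp add: poly_pcompose poly_lr[OF assms(1)])
    qed
    hence "poly (pderiv ?Q) t0 = Dir f (\<lambda>i. x i + t0 * w i) w" using pcomp_deriv[of ?Q t0] by (simp add: Dir_def)
    thus ?thesis using assms(2) by simp
  qed
  hence "pderiv ?Q = 0" using poly_all_0_iff_0 by blast
  hence "degree ?Q = 0" by (simp add: pderiv_eq_0_iff)
  then obtain a0 where "?Q = [:a0:]" by (rule degree_eq_zeroE)
  hence "poly ?Q t = poly ?Q 0" by simp
  thus ?thesis by (simp add: poly_lr[OF assms(1)])
qed

lemma PF_C:
  fixes f :: "(nat \<Rightarrow> 'a::field_char_0) \<Rightarrow> 'a"
  assumes "PF m f" shows "PF m (\<lambda>y. coeff (lr f y q) k)"
proof -
  have a: "PF m (\<lambda>a. a i)" if "i < m" for i using that by (rule PF_var)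
  have b: "PF m (\<lambda>a. q i)" for i by (rule PF_const)
  obtain Q where Q: "\<forall>a t. poly (Q a) t = f (\<lambda>i. a i + t * q i)" "\<forall>j. PF m (\<lambda>a. coeff (Q a) j)"
    using PF_line[of m f m "\<lambda>a. a" "\<lambda>a. q", OF assms a b] by blast
  have "lr f y q = Q y" for y by (rule lr_eq) (simp add: Q(1))
  thus ?thesis using Q(2) by simp
qed

lemma homD: "hom d f \<Longrightarrow> f (\<lambda>i. c * x i) = c ^ d * f x"
  unfolding hom_def by blast

lemma hom_ext0:
  fixes g :: "(nat \<Rightarrow> 'a::field_char_0) \<Rightarrow> 'a"
  assumes "PF m g" "\<And>c. c \<noteq> 0 \<Longrightarrow> c ^ k * g (\<lambda>i. c * y i) = c ^ e * g y"
  shows "(k \<le> e \<longrightarrow> g (\<lambda>i. 0 * y i) = 0 ^ (e - k) * g y) \<and> (e < k \<longrightarrow> g y = 0)"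
proof -
  let ?R = "lr g (\<lambda>_. 0) y"
  have pR: "poly ?R c = g (\<lambda>i. c * y i)" for c using poly_lr[OF assms(1), of "\<lambda>_. 0" y c] by simp
  have eq: "monom 1 k * ?R = monom (g y) e"
    by (rule poly_unique_nz) (simp add: poly_monom pR assms(2))
  have c: "coeff (monom 1 k * ?R) j = coeff (monom (g y) e) j" for j using eq by simp
  show ?thesis
  proof (intro conjI impI)
    assume "k \<le> e"
    have "coeff ?R 0 = (if k = e then g y else 0)" using c[of k] by (simp add: coeff_monom_mult coeff_monom)
    moreover have "coeff ?R 0 = g (\<lambda>i. 0 * y i)" using pR[of 0] by (simp add: poly_0_coeff_0)
    ultimately show "g (\<lambda>i. 0 * y i) = 0 ^ (e - k) * g y" using \<open>k \<le> e\<close> by auto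
  next
    assume "e < k"
    thus "g y = 0" using c[of e] by (simp add: coeff_monom_mult coeff_monom)
  qed
qed

lemma C_hom:
  fixes f :: "(nat \<Rightarrow> 'a::field_char_0) \<Rightarrow> 'a"
  assumes "PF m f" "hom e f"
  shows "(k \<le> e \<longrightarrow> hom (e - k) (\<lambda>y. coeff (lr f y q) k)) \<and> (e < k \<longrightarrow> (\<forall>y. coeff (lr f y q) k = 0))"
proof -
  let ?C = "\<lambda>y. coeff (lr f y q) k"
  have sc: "?C (\<lambda>i. c * y i) = c ^ e * inverse c ^ k * ?C y" if "c \<noteq> 0" for c y
  proof -
    have "lr f (\<lambda>i. c * y i) q = Polynomial.smult (c ^ e) (lr f y q \<circ>\<^sub>p [:0, inverse c:])"
    proof (rule lr_eq)
      fix t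
      have "(\<lambda>i. c * (y i + inverse c * t * q i)) = (\<lambda>i. c * y i + t * q i)"
        using that by (auto simp: fun_eq_iff field_simps)
      moreover have "f (\<lambda>i. c * (y i + inverse c * t * q i)) = c ^ e * f (\<lambda>i. y i + inverse c * t * q i)"
        using homD[OF assms(2), of c "\<lambda>i. y i + inverse c * t * q i"] by simp
      ultimately have "f (\<lambda>i. c * y i + t * q i) = c ^ e * f (\<lambda>i. y i + inverse c * t * q i)"
        by simp
      thus "poly (Polynomial.smult (c ^ e) (lr f y q \<circ>\<^sub>p [:0, inverse c:])) t = f (\<lambda>i. c * y i + t * q i)"
        by (simp add: poly_pcompose poly_lr[OF assms(1)] algebra_simps)
    qed
    thus ?thesis by (simp add: coeff_pcompose_linear)
  qed
  have sc2: "c ^ k * ?C (\<lambda>i. c * y i) = c ^ e * ?C y" if "c \<noteq> 0" for c y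
  proof -
    have "c ^ k * inverse c ^ k = 1" using that by (simp add: power_mult_distrib[symmetric])
    have "c ^ k * ?C (\<lambda>i. c * y i) = c ^ k * (c ^ e * inverse c ^ k * ?C y)" using sc[OF that] by simp
    also have "\<dots> = (c ^ k * inverse c ^ k) * (c ^ e * ?C y)" by (simp only: mult_ac)
    finally show ?thesis using \<open>c ^ k * inverse c ^ k = 1\<close> by simp
  qed
  note e0 = hom_ext0[OF PF_C[OF assms(1)] sc2]
  show ?thesis
  proof (intro conjI impI allI)
    assume ke: "k \<le> e"
    show "hom (e - k) ?C" unfolding hom_def
    proof (intro allI)
      fix c y
      show "?C (\<lambda>i. c * y i) = c ^ (e - k) * ?C y"
      proof (cases "c = 0")
        case True thus ?thesis using e0[of y] ke by simp
      next
        case False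
        have "c ^ e = c ^ (e - k) * c ^ k" using ke by (simp add: power_add[symmetric])
        hence "c ^ e * inverse c ^ k = c ^ (e - k)" using False by (simp add: power_mult_distrib[symmetric])
        thus ?thesis using sc[OF False] by simp
      qed
    qed
  next
    fix y assume "e < k" thus "?C y = 0" using e0[of y] by simp
  qed
qed

lemma hom_form: "hom d (form_eval n d (F :: (nat \<Rightarrow> nat) \<Rightarrow> 'a::comm_ring_1))"
  unfolding hom_def form_eval_def
proof (intro allI)
  fix c :: 'a and x
  have "(\<Prod>i<n. (c * x i) ^ \<alpha> i) = c ^ d * (\<Prod>i<n. x i ^ \<alpha> i)" if "\<alpha> \<in> monoms n d" for \<alpha>
  proof -
    have "(\<Prod>i<n. c ^ \<alpha> i) = c ^ (\<Sum>i<n. \<alpha> i)" by (simp add: power_sum)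
    also have "\<dots> = c ^ d" using that by (simp add: monoms_def)
    finally show ?thesis by (simp add: power_mult_distrib prod.distrib)
  qed
  thus "(\<Sum>\<alpha>\<in>monoms n d. F \<alpha> * (\<Prod>i<n. (c * x i) ^ \<alpha> i)) = c ^ d * (\<Sum>\<alpha>\<in>monoms n d. F \<alpha> * (\<Prod>i<n. x i ^ \<alpha> i))"
    by (simp add: sum_distrib_left mult_ac)
qed

lemma poly_eval_split: "poly_eval m D P x = (\<Sum>e\<le>D. form_eval m e P x)"
proof -
  have "monoms_le m D = (\<Union>e\<in>{..D}. monoms m e)"
    unfolding set_eq_iff by (simp add: monoms_le_def monoms_def)
  moreover have "\<forall>i\<in>{..D}. \<forall>j\<in>{..D}. i \<noteq> j \<longrightarrow> monoms m i \<inter> monoms m j = {}"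
    by (simp add: monoms_def disjoint_iff)
  ultimately show ?thesis unfolding poly_eval_def form_eval_def
    by (simp add: sum.UNION_disjoint finite_monoms)
qed

lemma hom_repr:
  fixes f :: "(nat \<Rightarrow> 'a::field_char_0) \<Rightarrow> 'a"
  assumes "PF m f" "hom d f"
  shows "\<exists>G. \<forall>x. f x = form_eval m d G x"
proof -
  obtain D P where fP: "\<forall>x. f x = poly_eval m D P x" using PF_repr[OF assms(1)] by blast
  have "f x = (if d \<le> D then form_eval m d P x else 0)" for x
  proof -
    let ?R = "\<Sum>e\<le>D. monom (form_eval m e P x) e"
    have "?R = monom (f x) d"
    proof (rule poly_unique)
      fix c
      have "poly ?R c = (\<Sum>e\<le>D. form_eval m e P (\<lambda>i. c * x i))"
        using hom_form[of e m P for e] by (simp add: poly_sum poly_monom hom_def mult_ac)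
      also have "\<dots> = f (\<lambda>i. c * x i)" using fP by (simp add: poly_eval_split)
      also have "\<dots> = poly (monom (f x) d) c" using assms(2) by (simp add: hom_def poly_monom mult_ac)
      finally show "poly ?R c = poly (monom (f x) d) c" .
    qed
    hence "coeff ?R d = f x" by simp
    moreover have "coeff ?R d = (if d \<le> D then form_eval m d P x else 0)"
      by (simp add: coeff_sum coeff_monom)
    ultimately show ?thesis by simp
  qed
  hence "\<forall>x. f x = form_eval m d (if d \<le> D then P else (\<lambda>_. 0)) x"
    by (simp add: form_eval_def)
  thus ?thesis by blast
qed

definition lin :: "((nat \<Rightarrow> 'a::field_char_0) \<Rightarrow> 'a) \<Rightarrow> bool" where
  "lin \<mu> \<longleftrightarrow> (\<forall>x y. \<mu> (\<lambda>i. x i + y i) = \<mu> x + \<mu> y) \<and> (\<forall>c x. \<mu> (\<lambda>i. c * x i) = c * \<mu> x)"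

definition spn :: "(nat \<Rightarrow> 'a::field_char_0) set \<Rightarrow> (nat \<Rightarrow> 'a) set" where
  "spn B = {x. \<exists>c. x = (\<lambda>i. \<Sum>v\<in>B. c v * v i)}"

definition closedsp :: "(nat \<Rightarrow> 'a::field_char_0) set \<Rightarrow> bool" where
  "closedsp S \<longleftrightarrow> (\<lambda>_. 0) \<in> S \<and> (\<forall>x\<in>S. \<forall>y\<in>S. (\<lambda>i. x i + y i) \<in> S) \<and> (\<forall>c. \<forall>x\<in>S. (\<lambda>i. c * x i) \<in> S)"

lemma lin_add: "lin \<mu> \<Longrightarrow> \<mu> (\<lambda>i. x i + y i) = \<mu> x + \<mu> y" by (simp add: lin_def)
lemma lin_smult: "lin \<mu> \<Longrightarrow> \<mu> (\<lambda>i. c * x i) = c * \<mu> x" by (simp add: lin_def)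

lemma lin_0: "lin \<mu> \<Longrightarrow> \<mu> (\<lambda>_. 0) = 0"
  using lin_smult[of \<mu> 0 "\<lambda>_. 0"] by simp

lemma lin_diff: "lin \<mu> \<Longrightarrow> \<mu> (\<lambda>i. x i - c * y i) = \<mu> x - c * \<mu> y"
  using lin_add[of \<mu> x "\<lambda>i. (- c) * y i"] lin_smult[of \<mu> "-c" y] by simp

lemma lin_sum:
  assumes "lin \<mu>" "finite A" shows "\<mu> (\<lambda>i. \<Sum>a\<in>A. c a * g a i) = (\<Sum>a\<in>A. c a * \<mu> (g a))"
  using assms(2)
proof (induction A rule: finite_induct)
  case empty thus ?case by (simp add: lin_0[OF assms(1)])
next
  case (insert a A)
  have "\<mu> (\<lambda>i. \<Sum>b\<in>insert a A. c b * g b i) = \<mu> (\<lambda>i. c a * g a i + (\<Sum>b\<in>A. c b * g b i))"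
    using insert by simp
  also have "\<dots> = c a * \<mu> (g a) + \<mu> (\<lambda>i. \<Sum>b\<in>A. c b * g b i)"
    using lin_add[OF assms(1), of "\<lambda>i. c a * g a i"] lin_smult[OF assms(1)] by simp
  finally show ?case using insert by simp
qed

lemma closed_sum:
  assumes "closedsp S" "finite A" "\<And>a. a \<in> A \<Longrightarrow> g a \<in> S" shows "(\<lambda>i. \<Sum>a\<in>A. c a * g a i) \<in> S"
  using assms(2,3)
proof (induction A rule: finite_induct)
  case empty thus ?case using assms(1) by (simp add: closedsp_def)
next
  case (insert a A)
  have "(\<lambda>i. c a * g a i) \<in> S" using insert assms(1) by (simp add: closedsp_def)
  moreover have "(\<lambda>i. \<Sum>b\<in>A. c b * g b i) \<in> S" using insert by simp
  ultimately have "(\<lambda>i. c a * g a i + (\<Sum>b\<in>A. c b * g b i)) \<in> S" using assms(1) by (simp add: closedsp_def)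
  thus ?case using insert by simp
qed

lemma closed_spn: "closedsp (spn B)"
  unfolding closedsp_def spn_def
proof (intro conjI ballI allI; clarify?)
  show "\<exists>c. (\<lambda>_. 0::'a) = (\<lambda>i. \<Sum>v\<in>B. c v * v i)" by (rule exI[of _ "\<lambda>_. 0"]) simp
next
  fix c1 c2 :: "(nat \<Rightarrow> 'a) \<Rightarrow> 'a"
  show "\<exists>c. (\<lambda>i. (\<Sum>v\<in>B. c1 v * v i) + (\<Sum>v\<in>B. c2 v * v i)) = (\<lambda>i. \<Sum>v\<in>B. c v * v i)"
    by (rule exI[of _ "\<lambda>v. c1 v + c2 v"]) (simp add: sum.distrib distrib_right)
next
  fix c :: 'a and c1 :: "(nat \<Rightarrow> 'a) \<Rightarrow> 'a"
  show "\<exists>c'. (\<lambda>i. c * (\<Sum>v\<in>B. c1 v * v i)) = (\<lambda>i. \<Sum>v\<in>B. c' v * v i)"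
    by (rule exI[of _ "\<lambda>v. c * c1 v"]) (simp add: sum_distrib_left mult_ac)
qed

lemma closed_lc:
  assumes "closedsp S" "x \<in> S" "y \<in> S" shows "(\<lambda>i. a * x i + b * y i) \<in> S"
proof -
  have ad: "\<forall>x\<in>S. \<forall>y\<in>S. (\<lambda>i. x i + y i) \<in> S" and sm: "\<forall>c. \<forall>x\<in>S. (\<lambda>i. c * x i) \<in> S"
    using assms(1) unfolding closedsp_def by blast+
  have "(\<lambda>i. a * x i) \<in> S" using sm assms(2) by blast
  moreover have "(\<lambda>i. b * y i) \<in> S" using sm assms(3) by blast
  ultimately show ?thesis using bspec[OF bspec[OF ad]] by fastforce
qed

lemma spn_mem:
  assumes "finite B" "v \<in> B" shows "v \<in> spn (B :: (nat \<Rightarrow> 'a::field_char_0) set)"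
proof -
  have "(\<Sum>u\<in>B. (if u = v then 1 else 0) * u i) = v i" for i
  proof -
    have "(\<Sum>u\<in>B. (if u = v then 1 else 0) * u i) = (\<Sum>u\<in>B. if u = v then u i else 0)"
      by (intro sum.cong) auto
    also have "\<dots> = v i" using assms by (simp add: sum.delta)
    finally show ?thesis .
  qed
  hence "v = (\<lambda>i. \<Sum>u\<in>B. (if u = v then 1 else 0) * u i)" by simp
  thus ?thesis unfolding spn_def mem_Collect_eq by (rule exI[of _ "\<lambda>u. if u = v then 1 else 0"])
qed

lemma spn_sub:
  assumes "finite B" "closedsp S" "B \<subseteq> S" shows "spn B \<subseteq> S"
proof
  fix x assume "x \<in> spn B"
  then obtain c where "x = (\<lambda>i. \<Sum>v\<in>B. c v * v i)" unfolding spn_def by blast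
  moreover have "(\<lambda>i. \<Sum>v\<in>B. c v * v i) \<in> S" using assms by (intro closed_sum) auto
  ultimately show "x \<in> S" by simp
qed

lemma closed_ker: "closedsp S \<Longrightarrow> lin \<mu> \<Longrightarrow> closedsp {x \<in> S. \<mu> x = 0}"
  unfolding closedsp_def by (simp add: lin_add lin_smult lin_0)

lemma spn_empty: "spn {} = {\<lambda>_. 0}"
  unfolding spn_def by simp

lemma exchange:
  fixes l :: "(nat \<Rightarrow> 'a::field_char_0) \<Rightarrow> 'a"
  assumes "lin l" "finite B" "q \<in> spn B" "l q \<noteq> 0"
  shows "\<exists>B'. finite B' \<and> card B' < card B \<and> spn B' = {x \<in> spn B. l x = 0}"
proof -
  obtain c where qc: "q = (\<lambda>i. \<Sum>v\<in>B. c v * v i)" using assms(3) unfolding spn_def by blast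
  have "l q = (\<Sum>v\<in>B. c v * l v)" using qc lin_sum[OF assms(1,2)] by simp
  then obtain v0 where v0: "v0 \<in> B" "l v0 \<noteq> 0" using assms(4) by (metis (no_types, lifting) mult_zero_right sum.neutral)
  define \<phi> where "\<phi> v = (\<lambda>i. v i - (l v / l v0) * v0 i)" for v
  define B' where "B' = \<phi> ` (B - {v0})"
  have finB': "finite B'" using assms(2) by (simp add: B'_def)
  have "card B' \<le> card (B - {v0})" unfolding B'_def using assms(2) by (intro card_image_le) simp
  also have "\<dots> < card B" using v0(1) assms(2) by (intro card_Diff1_less)
  finally have cardB': "card B' < card B" .
  have lphi: "l (\<phi> v) = 0" for v
  proof -
    have "l (\<phi> v) = l v - (l v / l v0) * l v0" unfolding \<phi>_def by (rule lin_diff[OF assms(1)])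
    thus ?thesis using v0(2) by simp
  qed
  have phimem: "\<phi> v \<in> spn B" if "v \<in> B" for v
  proof -
    have "(\<lambda>i. 1 * v i + (- (l v / l v0)) * v0 i) \<in> spn B"
      by (rule closed_lc[OF closed_spn spn_mem[OF assms(2) that] spn_mem[OF assms(2) v0(1)]])
    thus ?thesis by (simp add: \<phi>_def)
  qed
  have sub1: "spn B' \<subseteq> {x \<in> spn B. l x = 0}"
    by (rule spn_sub[OF finB' closed_ker[OF closed_spn assms(1)]]) (auto simp: B'_def lphi phimem)
  have sub2: "x \<in> spn B'" if xin: "x \<in> spn B" and lx: "l x = 0" for x
  proof -
    obtain a where xa: "x = (\<lambda>i. \<Sum>v\<in>B. a v * v i)" using xin unfolding spn_def by blast
    define x' where "x' = (\<lambda>i. \<Sum>v\<in>B - {v0}. a v * \<phi> v i)"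
    define \<kappa> where "\<kappa> = a v0 + (\<Sum>v\<in>B - {v0}. a v * (l v / l v0))"
    have x'mem: "x' \<in> spn B'" unfolding x'_def
      by (rule closed_sum[OF closed_spn]) (auto simp: B'_def assms(2) intro: spn_mem finB')
    have decomp: "x = (\<lambda>i. x' i + \<kappa> * v0 i)"
    proof
      fix i
      have "x i = a v0 * v0 i + (\<Sum>v\<in>B - {v0}. a v * v i)"
        using xa assms(2) v0(1) by (simp add: sum.remove)
      moreover have "x' i = (\<Sum>v\<in>B - {v0}. a v * v i) - (\<Sum>v\<in>B - {v0}. a v * (l v / l v0)) * v0 i"
      proof -
        have "x' i = (\<Sum>v\<in>B - {v0}. a v * v i - (a v * (l v / l v0)) * v0 i)"
          unfolding x'_def \<phi>_def by (intro sum.cong refl) (simp add: right_diff_distrib mult.assoc)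
        also have "\<dots> = (\<Sum>v\<in>B - {v0}. a v * v i) - (\<Sum>v\<in>B - {v0}. a v * (l v / l v0)) * v0 i"
          by (simp only: sum_subtractf sum_distrib_right)
        finally show ?thesis .
      qed
      ultimately show "x i = x' i + \<kappa> * v0 i" by (simp add: \<kappa>_def algebra_simps)
    qed
    have "l x' = (\<Sum>v\<in>B - {v0}. a v * l (\<phi> v))" unfolding x'_def
      using assms(2) by (intro lin_sum[OF assms(1)]) simp
    hence "l x' = 0" by (simp add: lphi)
    hence "l x = \<kappa> * l v0" using decomp lin_add[OF assms(1)] lin_smult[OF assms(1)] by simp
    hence "\<kappa> = 0" using lx v0(2) by simp
    hence "x = x'" using decomp by simp
    thus ?thesis using x'mem by simp
  qed
  show ?thesis using finB' cardB' sub1 sub2 by blast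
qed

definition vfree :: "((nat \<Rightarrow> 'a::field_char_0) \<Rightarrow> 'a) set \<Rightarrow> (nat \<Rightarrow> 'a) set \<Rightarrow> bool" where
  "vfree T S \<longleftrightarrow> (\<forall>w\<in>S. w \<noteq> (\<lambda>_. 0) \<longrightarrow> (\<exists>f\<in>T. \<exists>x\<in>S. \<exists>t. f (\<lambda>i. x i + t * w i) \<noteq> f x))"

definition good :: "((nat \<Rightarrow> 'a::field_char_0) \<Rightarrow> 'a) set \<Rightarrow> bool" where
  "good T \<longleftrightarrow> (\<forall>f\<in>T. \<exists>N d. PF N f \<and> hom d f)"

lemma nonroot:
  fixes f :: "(nat \<Rightarrow> 'a::field_char_0) \<Rightarrow> 'a"
  assumes "PF N f" "f y \<noteq> c"
  shows "\<exists>s. s \<noteq> 0 \<and> f (\<lambda>i. y i + s * u i) \<noteq> c"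
proof (rule ccontr)
  assume "\<not> ?thesis"
  hence all: "\<And>s. s \<noteq> 0 \<Longrightarrow> f (\<lambda>i. y i + s * u i) = c" by blast
  let ?R = "lr f y u - [:c:]"
  have "poly ?R 0 \<noteq> 0" using assms poly_lr[OF assms(1), of y u 0] by simp
  hence "?R \<noteq> 0" by auto
  hence fin: "finite {s. poly ?R s = 0}" by (rule poly_roots_finite)
  have "UNIV - {0} \<subseteq> {s. poly ?R s = 0}" using all poly_lr[OF assms(1), of y u] by auto
  hence "finite (UNIV - {0::'a})" using fin finite_subset by blast
  thus False using infinite_UNIV_char_0[where 'a='a] by simp
qed

lemma shift_lr:
  fixes g :: "(nat \<Rightarrow> 'a::field_char_0) \<Rightarrow> 'a"
  assumes "PF N g" "\<And>s. g (\<lambda>i. x i + s * q i + t * w i) = g (\<lambda>i. x i + s * q i)"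
  shows "lr g (\<lambda>i. x i + t * w i) q = lr g x q"
proof (rule lr_eq)
  fix s
  have "(\<lambda>i. x i + t * w i + s * q i) = (\<lambda>i. x i + s * q i + t * w i)" by (simp add: algebra_simps)
  thus "poly (lr g x q) s = g (\<lambda>i. x i + t * w i + s * q i)" using assms(2) poly_lr[OF assms(1)] by simp
qed

lemma core:
  assumes "finite B" "card B \<le> r" "good T" "vfree T (spn B)" "p \<in> spn B" "p \<noteq> (\<lambda>_. 0)"
  shows "\<exists>\<mu>. lin \<mu> \<and> \<mu> p \<noteq> 0 \<and> vfree T {x \<in> spn B. \<mu> x = 0}"
  using assms
proof (induction r arbitrary: B T p)
  case 0
  hence "B = {}" by simp
  hence "p = (\<lambda>_. 0)" using 0(5) spn_empty by blast
  thus ?case using 0(6) by blast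
next
  case (Suc r)
  show ?case
  proof (cases "\<exists>f\<in>T. \<exists>q\<in>spn B. f q \<noteq> f (\<lambda>_. 0) \<and> (\<forall>c. q \<noteq> (\<lambda>i. c * p i))")
    case False
    have inline: "\<exists>c. u = (\<lambda>i. c * p i)" if uin: "u \<in> spn B" for u
    proof (rule ccontr)
      assume nu: "\<nexists>c. u = (\<lambda>i. c * p i)"
      have u0: "u \<noteq> (\<lambda>_. 0)"
      proof
        assume "u = (\<lambda>_. 0)"
        hence "u = (\<lambda>i. 0 * p i)" by simp
        thus False using nu by blast
      qed
      obtain f x t where f: "f \<in> T" "x \<in> spn B" "f (\<lambda>i. x i + t * u i) \<noteq> f x"
        using Suc.prems(4) uin u0 unfolding vfree_def by blast
      obtain N d where PF: "PF N f" using Suc.prems(3) f(1) unfolding good_def by blast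
      have xtu: "(\<lambda>i. x i + t * u i) \<in> spn B"
        using closed_lc[OF closed_spn f(2) uin, of 1 t] by simp
      obtain y where y: "y \<in> spn B" "f y \<noteq> f (\<lambda>_. 0)"
      proof (cases "f x = f (\<lambda>_. 0)")
        case True thus ?thesis using that[OF xtu] f(3) by simp
      next
        case False thus ?thesis using that[OF f(2)] by simp
      qed
      obtain c0 where c0: "y = (\<lambda>i. c0 * p i)" using False f(1) y by blast
      obtain s where s: "s \<noteq> 0" "f (\<lambda>i. y i + s * u i) \<noteq> f (\<lambda>_. 0)" using nonroot[OF PF y(2)] by blast
      have "(\<lambda>i. y i + s * u i) \<in> spn B" using closed_lc[OF closed_spn y(1) uin, of 1 s] by simp
      then obtain c1 where c1: "(\<lambda>i. y i + s * u i) = (\<lambda>i. c1 * p i)" using False s f(1) by blast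
      have "u = (\<lambda>i. ((c1 - c0) / s) * p i)"
      proof
        fix i
        have "y i + s * u i = c1 * p i" using fun_cong[OF c1, of i] by simp
        thus "u i = ((c1 - c0) / s) * p i" using c0 s(1) by (simp add: field_simps)
      qed
      thus False using nu by blast
    qed
    obtain i0 where i0: "p i0 \<noteq> 0" using Suc.prems(6) by auto
    have lin0: "lin (\<lambda>x. x i0)" by (simp add: lin_def)
    have "vfree T {x \<in> spn B. x i0 = 0}"
      unfolding vfree_def
    proof (intro ballI impI)
      fix w assume w: "w \<in> {x \<in> spn B. x i0 = 0}" "w \<noteq> (\<lambda>_. 0)"
      obtain c where c: "w = (\<lambda>i. c * p i)" using inline w(1) by blast
      hence "c = 0" using w(1) i0 by simp
      thus "\<exists>f\<in>T. \<exists>x\<in>{x \<in> spn B. x i0 = 0}. \<exists>t. f (\<lambda>i. x i + t * w i) \<noteq> f x"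
        using c w(2) by simp
    qed
    thus ?thesis using lin0 i0 by blast
  next
    case True
    then obtain f q where fq: "f \<in> T" "q \<in> spn B" "f q \<noteq> f (\<lambda>_. 0)" "\<forall>c. q \<noteq> (\<lambda>i. c * p i)" by blast
    obtain N d where PF: "PF N f" and hd: "hom d f" using Suc.prems(3) fq(1) unfolding good_def by blast
    have h0: "f (\<lambda>i. 0 * q i) = 0 ^ d * f q" by (rule homD[OF hd])
    have d0: "d \<noteq> 0"
    proof
      assume "d = 0" thus False using h0 fq(3) by simp
    qed
    have f0: "f (\<lambda>_. 0) = 0" using h0 d0 by simp
    define l where "l = Dir f q"
    have linl: "lin l" using D_lin[OF PF] by (simp add: lin_def l_def)
    have lq: "l q \<noteq> 0" using D_euler[OF hd, of q] d0 fq(3) f0 by (simp add: l_def)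
    obtain B' where B': "finite B'" "card B' < card B" "spn B' = {x \<in> spn B. l x = 0}"
      using exchange[OF linl Suc.prems(1) fq(2) lq] by blast
    define T' where "T' = {g'. \<exists>g\<in>T. \<exists>k. g' = (\<lambda>y. coeff (lr g y q) k)}"
    have goodT': "good T'"
      unfolding good_def
    proof
      fix g' assume "g' \<in> T'"
      then obtain g k where g: "g \<in> T" "g' = (\<lambda>y. coeff (lr g y q) k)" unfolding T'_def by blast
      obtain Ng e where PFg: "PF Ng g" and he: "hom e g" using Suc.prems(3) g(1) unfolding good_def by blast
      have "PF Ng g'" using PF_C[OF PFg] g(2) by simp
      moreover have "\<exists>d'. hom d' g'"
      proof (cases "k \<le> e")
        case True thus ?thesis using C_hom[OF PFg he, of k q] g(2) by blast
      next
        case False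
        hence "\<forall>y. g' y = 0" using C_hom[OF PFg he, of k q] g(2) by simp
        hence "hom 0 g'" by (simp add: hom_def)
        thus ?thesis by blast
      qed
      ultimately show "\<exists>N d. PF N g' \<and> hom d g'" by blast
    qed
    have decomp: "(\<lambda>i. y i - (l y / l q) * q i) \<in> spn B'" if "y \<in> spn B" for y
    proof -
      have "(\<lambda>i. 1 * y i + (- (l y / l q)) * q i) \<in> spn B" by (rule closed_lc[OF closed_spn that fq(2)])
      moreover have "l (\<lambda>i. y i - (l y / l q) * q i) = l y - (l y / l q) * l q" by (rule lin_diff[OF linl])
      hence "l (\<lambda>i. y i - (l y / l q) * q i) = 0" using lq by simp
      ultimately show ?thesis using B'(3) by simp
    qed
    have vT': "vfree T' (spn B')"
      unfolding vfree_def
    proof (intro ballI impI)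
      fix w assume w: "w \<in> spn B'" "w \<noteq> (\<lambda>_. 0)"
      hence wB: "w \<in> spn B" using B'(3) by blast
      obtain g y t where g: "g \<in> T" "y \<in> spn B" "g (\<lambda>i. y i + t * w i) \<noteq> g y"
        using Suc.prems(4) wB w(2) unfolding vfree_def by blast
      obtain Ng where PFg: "PF Ng g" using Suc.prems(3) g(1) unfolding good_def by blast
      define \<sigma> where "\<sigma> = l y / l q"
      define x where "x = (\<lambda>i. y i - \<sigma> * q i)"
      have x: "x \<in> spn B'" using decomp[OF g(2)] by (simp add: x_def \<sigma>_def)
      show "\<exists>g'\<in>T'. \<exists>x\<in>spn B'. \<exists>t. g' (\<lambda>i. x i + t * w i) \<noteq> g' x"
      proof (rule ccontr)
        assume "\<not> ?thesis"
        hence H: "\<And>g' x t. g' \<in> T' \<Longrightarrow> x \<in> spn B' \<Longrightarrow> g' (\<lambda>i. x i + t * w i) = g' x" by blast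
        have "\<forall>k. coeff (lr g (\<lambda>i. x i + t * w i) q) k = coeff (lr g x q) k"
        proof
          fix k
          have mem: "(\<lambda>y. coeff (lr g y q) k) \<in> T'" using g(1) unfolding T'_def by blast
          show "coeff (lr g (\<lambda>i. x i + t * w i) q) k = coeff (lr g x q) k" using H[OF mem x] by simp
        qed
        hence "lr g (\<lambda>i. x i + t * w i) q = lr g x q" by (simp add: poly_eq_iff)
        hence "poly (lr g (\<lambda>i. x i + t * w i) q) \<sigma> = poly (lr g x q) \<sigma>" by simp
        hence "g (\<lambda>i. x i + t * w i + \<sigma> * q i) = g (\<lambda>i. x i + \<sigma> * q i)" by (simp add: poly_lr[OF PFg])
        moreover have "(\<lambda>i. x i + t * w i + \<sigma> * q i) = (\<lambda>i. y i + t * w i)" "(\<lambda>i. x i + \<sigma> * q i) = y"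
          by (auto simp: x_def)
        ultimately show False using g(3) by simp
      qed
    qed
    define pP where "pP = (\<lambda>i. p i - (l p / l q) * q i)"
    have pP: "pP \<in> spn B'" using decomp[OF Suc.prems(5)] by (simp add: pP_def)
    have pP0: "pP \<noteq> (\<lambda>_. 0)"
    proof
      assume "pP = (\<lambda>_. 0)"
      hence pe: "p = (\<lambda>i. (l p / l q) * q i)" by (auto simp: pP_def fun_eq_iff)
      have "l p \<noteq> 0"
      proof
        assume "l p = 0" hence "p = (\<lambda>_. 0)" using pe by simp
        thus False using Suc.prems(6) by simp
      qed
      hence "q = (\<lambda>i. (l q / l p) * p i)" using lq by (subst pe) (auto simp: fun_eq_iff)
      thus False using fq(4) by blast
    qed
    have cB': "card B' \<le> r" using B'(2) Suc.prems(2) by simp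
    obtain \<mu>' where \<mu>': "lin \<mu>'" "\<mu>' pP \<noteq> 0" "vfree T' {x \<in> spn B'. \<mu>' x = 0}"
      using Suc.IH[OF B'(1) cB' goodT' vT' pP pP0] by blast
    define \<mu> where "\<mu> x = \<mu>' x - (l x / l q) * \<mu>' q" for x
    have lin\<mu>: "lin \<mu>"
      unfolding lin_def \<mu>_def
      using lin_add[OF \<mu>'(1)] lin_smult[OF \<mu>'(1)] lin_add[OF linl] lin_smult[OF linl]
      by (simp add: algebra_simps add_divide_distrib)
    have "\<mu>' pP = \<mu>' p - (l p / l q) * \<mu>' q" unfolding pP_def by (rule lin_diff[OF \<mu>'(1)])
    hence \<mu>p: "\<mu> p \<noteq> 0" using \<mu>'(2) by (simp add: \<mu>_def)
    have "vfree T {x \<in> spn B. \<mu> x = 0}"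
      unfolding vfree_def
    proof (intro ballI impI)
      fix w assume w: "w \<in> {x \<in> spn B. \<mu> x = 0}" "w \<noteq> (\<lambda>_. 0)"
      show "\<exists>g\<in>T. \<exists>x\<in>{x \<in> spn B. \<mu> x = 0}. \<exists>t. g (\<lambda>i. x i + t * w i) \<noteq> g x"
      proof (rule ccontr)
        assume "\<not> ?thesis"
        hence V: "\<And>g x t. g \<in> T \<Longrightarrow> x \<in> spn B \<Longrightarrow> \<mu> x = 0 \<Longrightarrow> g (\<lambda>i. x i + t * w i) = g x" by blast
        have \<mu>q: "\<mu> q = 0" using lq by (simp add: \<mu>_def)
        have "l w = 0" unfolding l_def by (rule D_vertex) (rule V[OF fq(1) fq(2) \<mu>q])
        hence wB': "w \<in> spn B'" using B'(3) w(1) by blast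
        have "\<mu>' w = 0" using w(1) \<open>l w = 0\<close> by (simp add: \<mu>_def)
        then obtain g' x t where g': "g' \<in> T'" "x \<in> spn B'" "\<mu>' x = 0" "g' (\<lambda>i. x i + t * w i) \<noteq> g' x"
          using \<mu>'(3) wB' w(2) unfolding vfree_def by blast
        obtain g k where g: "g \<in> T" "g' = (\<lambda>y. coeff (lr g y q) k)" using g'(1) unfolding T'_def by blast
        obtain Ng where PFg: "PF Ng g" using Suc.prems(3) g(1) unfolding good_def by blast
        have xB: "x \<in> spn B" "l x = 0" using g'(2) B'(3) by auto
        have "lr g (\<lambda>i. x i + t * w i) q = lr g x q"
        proof (rule shift_lr[OF PFg])
          fix s
          have m1: "(\<lambda>i. 1 * x i + s * q i) \<in> spn B" by (rule closed_lc[OF closed_spn xB(1) fq(2)])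
          have "\<mu> (\<lambda>i. 1 * x i + s * q i) = 0"
            using lin_add[OF \<mu>'(1)] lin_smult[OF \<mu>'(1)] lin_add[OF linl] lin_smult[OF linl] g'(3) xB(2) lq
            by (simp add: \<mu>_def field_simps)
          thus "g (\<lambda>i. x i + s * q i + t * w i) = g (\<lambda>i. x i + s * q i)"
            using V[OF g(1) m1] by simp
        qed
        thus False using g'(4) g(2) by simp
      qed
    qed
    thus ?thesis using lin\<mu> \<mu>p by blast
  qed
qed

definition V :: "nat \<Rightarrow> (nat \<Rightarrow> 'a::field_char_0) set" where
  "V n = {x. \<forall>i\<ge>n. x i = 0}"

definition ee :: "nat \<Rightarrow> nat \<Rightarrow> 'a::field_char_0" where
  "ee i = (\<lambda>j. if j = i then 1 else 0)"

lemma ee_inj: "inj_on (ee :: nat \<Rightarrow> nat \<Rightarrow> 'a::field_char_0) A"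
  unfolding inj_on_def ee_def by (metis one_neq_zero)

lemma sum_ee: "(\<Sum>j<n. c j * (ee j i :: 'a::field_char_0)) = (if i < n then c i else 0)"
proof -
  have "(\<Sum>j<n. c j * (ee j i :: 'a)) = (\<Sum>j<n. if j = i then c j else 0)"
    by (intro sum.cong) (auto simp: ee_def)
  thus ?thesis by (simp add: sum.delta')
qed

lemma V_expand: "x \<in> V n \<Longrightarrow> (\<lambda>i. \<Sum>j<n. x j * ee j i) = (x :: nat \<Rightarrow> 'a::field_char_0)"
  by (rule ext) (simp add: sum_ee V_def)

lemma spn_basis: "spn ((ee :: nat \<Rightarrow> nat \<Rightarrow> 'a::field_char_0) ` {..<n}) = V n"
proof
  show "spn (ee ` {..<n}) \<subseteq> (V n :: (nat \<Rightarrow> 'a) set)"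
    by (rule spn_sub) (auto simp: closedsp_def V_def ee_def)
next
  show "V n \<subseteq> spn ((ee :: nat \<Rightarrow> nat \<Rightarrow> 'a) ` {..<n})"
  proof
    fix x :: "nat \<Rightarrow> 'a" assume x: "x \<in> V n"
    let ?c = "\<lambda>v. x (inv_into {..<n} (ee :: nat \<Rightarrow> nat \<Rightarrow> 'a) v)"
    have "(\<lambda>i. \<Sum>v\<in>ee ` {..<n}. ?c v * v i) = (\<lambda>i. \<Sum>j<n. ?c (ee j) * ee j i)"
      by (subst sum.reindex[OF ee_inj]) simp
    also have "\<dots> = (\<lambda>i. \<Sum>j<n. x j * ee j i)"
      by (intro ext sum.cong refl) (simp add: inv_into_f_f[OF ee_inj])
    also have "\<dots> = x" using V_expand[OF x] .
    finally have "(\<lambda>i. \<Sum>v\<in>ee ` {..<n}. ?c v * v i) = x" .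
    thus "x \<in> spn (ee ` {..<n})" unfolding spn_def mem_Collect_eq by (intro exI[of _ ?c]) (rule sym)
  qed
qed

lemma lin_V: "lin \<mu> \<Longrightarrow> x \<in> V n \<Longrightarrow> \<mu> x = (\<Sum>j<n. x j * \<mu> (ee j))"
  using lin_sum[of \<mu> "{..<n}" x ee] V_expand[of x n] by simp

lemma concise_vfree:
  fixes F :: "(nat \<Rightarrow> nat) \<Rightarrow> 'a::field_char_0"
  assumes "concise n d F"
  shows "vfree {form_eval n d F} (V n)"
  unfolding vfree_def
proof (intro ballI impI)
  let ?F = "form_eval n d F"
  fix w :: "nat \<Rightarrow> 'a" assume w: "w \<in> V n" "w \<noteq> (\<lambda>_. 0)"
  show "\<exists>f\<in>{?F}. \<exists>x\<in>V n. \<exists>t. f (\<lambda>i. x i + t * w i) \<noteq> f x"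
  proof (rule ccontr)
    assume "\<not> ?thesis"
    hence vert: "\<And>x t. x \<in> V n \<Longrightarrow> ?F (\<lambda>i. x i + t * w i) = ?F x" by blast
    obtain k where k: "w k \<noteq> 0" using w(2) by auto
    have kn: "k < n"
    proof (rule ccontr)
      assume "\<not> k < n" thus False using k w(1) unfolding V_def by simp
    qed
    have PFF: "PF n ?F" by (rule PF_form_eval)
    define tr where "tr x = (\<lambda>i. if i < n then x i else 0)" for x :: "nat \<Rightarrow> 'a"
    define A where "A x = (\<lambda>i. tr x i - (x k / w k) * w i)" for x
    have FA: "?F x = ?F (A x)" for x
    proof -
      have "?F x = ?F (tr x)" by (rule PF_local[OF PFF]) (simp add: tr_def)
      also have "\<dots> = ?F (\<lambda>i. tr x i + (- (x k / w k)) * w i)"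
        by (rule vert[symmetric]) (simp add: tr_def V_def)
      finally show ?thesis by (simp add: A_def)
    qed
    define \<sigma> where "\<sigma> j = (if j < k then j else Suc j)" for j
    define ins where "ins z = (\<lambda>i. if i < k then z i else if i = k then 0 else z (i - 1))" for z :: "nat \<Rightarrow> 'a"
    define Gf where "Gf z = ?F (ins z)" for z
    have PFG: "PF (n - 1) Gf"
      unfolding Gf_def ins_def
    proof (rule PF_comp[OF PFF])
      fix i assume i: "i < n"
      show "PF (n - 1) (\<lambda>a. if i < k then a i else if i = k then 0 else a (i - 1))"
      proof (cases "i < k")
        case True thus ?thesis using kn by (simp add: PF_var)
      next
        case False
        show ?thesis
        proof (cases "i = k")
          case True thus ?thesis using False by (simp add: PF_const)
        next
          case False2: False
          thus ?thesis using False i by (simp add: PF_var)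
        qed
      qed
    qed
    have homG: "hom d Gf"
      unfolding hom_def Gf_def
    proof (intro allI)
      fix c :: 'a and z
      have "ins (\<lambda>i. c * z i) = (\<lambda>i. c * ins z i)" by (auto simp: ins_def)
      thus "?F (ins (\<lambda>i. c * z i)) = c ^ d * ?F (ins z)" using homD[OF hom_form] by simp
    qed
    obtain G where G: "\<And>z. Gf z = form_eval (n - 1) d G z" using hom_repr[OF PFG homG] by blast
    define L where "L j i = (if i = \<sigma> j then 1 else 0) - (if i = k then w (\<sigma> j) / w k else 0)" for j i
    have Lx: "(\<Sum>i<n. L j i * x i) = A x (\<sigma> j)" if "j < n - 1" for j x
    proof -
      have sj: "\<sigma> j < n" using that kn unfolding \<sigma>_def by auto
      have "(\<Sum>i<n. L j i * x i) = (\<Sum>i<n. (if i = \<sigma> j then x i else 0) - (if i = k then w (\<sigma> j) / w k * x i else 0))"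
        by (intro sum.cong refl) (simp add: L_def)
      also have "\<dots> = (\<Sum>i<n. (if i = \<sigma> j then x i else 0)) - (\<Sum>i<n. if i = k then w (\<sigma> j) / w k * x i else 0)"
        by (rule sum_subtractf)
      also have "\<dots> = x (\<sigma> j) - w (\<sigma> j) / w k * x k" using sj kn by (simp add: sum.delta)
      also have "\<dots> = A x (\<sigma> j)" using sj by (simp add: A_def tr_def)
      finally show ?thesis .
    qed
    have "?F x = form_eval (n - 1) d G (\<lambda>j. \<Sum>i<n. L j i * x i)" for x
    proof -
      have "form_eval (n - 1) d G (\<lambda>j. \<Sum>i<n. L j i * x i) = Gf (\<lambda>j. \<Sum>i<n. L j i * x i)" by (simp add: G)
      also have "\<dots> = Gf (\<lambda>j. A x (\<sigma> j))" by (rule PF_local[OF PFG]) (simp add: Lx)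
      also have "\<dots> = ?F (A x)" unfolding Gf_def
      proof (rule PF_local[OF PFF])
        fix i assume i: "i < n"
        show "ins (\<lambda>j. A x (\<sigma> j)) i = A x i"
        proof (cases "i < k")
          case True thus ?thesis by (simp add: ins_def \<sigma>_def)
        next
          case False
          show ?thesis
          proof (cases "i = k")
            case True thus ?thesis using k kn by (simp add: ins_def A_def tr_def)
          next
            case False
            hence "\<sigma> (i - 1) = i" using \<open>\<not> i < k\<close> by (simp add: \<sigma>_def)
            thus ?thesis using False \<open>\<not> i < k\<close> by (simp add: ins_def)
          qed
        qed
      qed
      finally show ?thesis using FA by simp
    qed
    moreover have "n - 1 < n" using kn by simp
    ultimately show False using assms unfolding concise_def concise_fn_def by blast
  qed
qed

lemma det_mat0: "det (mat 0 0 f) = 1"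
  by (simp add: det_def)

lemma points:
  fixes g :: "nat \<Rightarrow> 'b \<Rightarrow> 'a::field"
  assumes "\<And>w. (\<exists>j<r. w j \<noteq> 0) \<Longrightarrow> \<exists>y. (\<Sum>j<r. w j * g j y) \<noteq> 0"
  shows "\<exists>ys. det (mat r r (\<lambda>(i,j). g j (ys i))) \<noteq> 0"
  using assms
proof (induction r)
  case 0 thus ?case by (simp add: det_mat0)
next
  case (Suc r)
  have "\<exists>y. (\<Sum>j<r. w j * g j y) \<noteq> 0" if wj: "\<exists>j<r. w j \<noteq> 0" for w
  proof -
    let ?w = "\<lambda>j. if j < r then w j else 0"
    have "\<exists>j<Suc r. ?w j \<noteq> 0" using wj by auto
    then obtain y where "(\<Sum>j<Suc r. ?w j * g j y) \<noteq> 0" using Suc.prems[of ?w] by blast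
    hence "(\<Sum>j<r. w j * g j y) \<noteq> 0" by simp
    thus ?thesis by blast
  qed
  then obtain ys where ys: "det (mat r r (\<lambda>(i,j). g j (ys i))) \<noteq> 0" using Suc.IH by blast
  define A where "A y = mat (Suc r) (Suc r) (\<lambda>(i,j). g j ((ys(r := y)) i))" for y
  have A: "A y \<in> carrier_mat (Suc r) (Suc r)" for y by (simp add: A_def)
  have del: "mat_delete (A y) r j = mat_delete (A y') r j" for y y' j
    by (rule eq_matI) (auto simp: A_def mat_delete_def)
  have delr: "mat_delete (A y) r r = mat r r (\<lambda>(i,j). g j (ys i))" for y
    by (rule eq_matI) (auto simp: A_def mat_delete_def)
  define w where "w j = cofactor (A undefined) r j" for j
  have "w r \<noteq> 0" using ys delr by (simp add: w_def cofactor_def)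
  then obtain y where y: "(\<Sum>j<Suc r. w j * g j y) \<noteq> 0" using Suc.prems[of w] by blast
  have "det (A y) = (\<Sum>j<Suc r. A y $$ (r, j) * cofactor (A y) r j)"
    by (rule laplace_expansion_row[OF A]) simp
  also have "\<dots> = (\<Sum>j<Suc r. w j * g j y)"
  proof (intro sum.cong refl)
    fix j assume "j \<in> {..<Suc r}"
    hence "A y $$ (r, j) = g j y" by (simp add: A_def)
    moreover have "cofactor (A y) r j = w j" unfolding w_def cofactor_def using del[where y=y and y'=undefined and j=j] by simp
    ultimately show "A y $$ (r, j) * cofactor (A y) r j = w j * g j y" by simp
  qed
  finally have "det (A y) \<noteq> 0" using y by simp
  thus ?case unfolding A_def by blast
qed

lemma PF_subst:
  assumes "n \<ge> 1"
  shows "PF (n - 1) (subst_last n d (F :: (nat \<Rightarrow> nat) \<Rightarrow> 'a::field_char_0) a)"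
proof -
  have eq: "subst_last n d F a = (\<lambda>x. form_eval n d F (\<lambda>i. if i = n - 1 then (\<Sum>l<n - 1. a l * x l) else x i))"
    by (rule ext) (simp add: subst_last_def fun_upd_def cong: if_cong)
  show ?thesis unfolding eq
  proof (rule PF_comp[OF PF_form_eval])
    fix i assume i: "i < n"
    show "PF (n - 1) (\<lambda>x. if i = n - 1 then \<Sum>l<n - 1. a l * x l else x i)"
    proof (cases "i = n - 1")
      case True thus ?thesis by (simp, intro PF_sum PF_mult PF_const PF_var) auto
    next
      case False thus ?thesis using i by (simp add: PF_var)
    qed
  qed
qed

lemma PF_entry:
  assumes "n \<ge> 1"
  shows "PF (n - 1) (\<lambda>a. Dir (subst_last n d (F :: (nat \<Rightarrow> nat) \<Rightarrow> 'a::field_char_0) a) y v)"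
proof -
  define X where "X a i = (if i = n - 1 then (\<Sum>l<n - 1. a l * y l) else y i)" for a :: "nat \<Rightarrow> 'a" and i
  define W where "W a i = (if i = n - 1 then (\<Sum>l<n - 1. a l * v l) else v i)" for a :: "nat \<Rightarrow> 'a" and i
  have PX: "PF (n - 1) (\<lambda>a. X a i)" for i
    unfolding X_def by (cases "i = n - 1") (simp_all add: PF_const, intro PF_sum PF_mult PF_const PF_var, auto)
  have PW: "PF (n - 1) (\<lambda>a. W a i)" for i
    unfolding W_def by (cases "i = n - 1") (simp_all add: PF_const, intro PF_sum PF_mult PF_const PF_var, auto)
  obtain Q where Q: "\<forall>a t. poly (Q a) t = form_eval n d F (\<lambda>i. X a i + t * W a i)" "\<forall>j. PF (n - 1) (\<lambda>a. coeff (Q a) j)"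
    using PF_line[of n "form_eval n d F" "n - 1" X W, OF PF_form_eval PX PW] by blast
  have "lr (subst_last n d F a) y v = Q a" for a
  proof (rule lr_eq)
    fix t
    have "(\<lambda>i. y i + t * v i)(n - 1 := \<Sum>l<n - 1. a l * (y l + t * v l)) = (\<lambda>i. X a i + t * W a i)"
      by (rule ext) (simp add: X_def W_def algebra_simps sum.distrib sum_distrib_left)
    thus "poly (Q a) t = subst_last n d F a (\<lambda>i. y i + t * v i)" using Q(1) by (simp add: subst_last_def)
  qed
  thus ?thesis using Q(2) by (simp add: Dir_def)
qed

lemma lin_Dir: "PF m f \<Longrightarrow> lin (Dir f y)"
  using D_lin by (simp add: lin_def) blast

lemma V_lt: "x \<in> V n \<Longrightarrow> x i \<noteq> 0 \<Longrightarrow> i < n"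
  by (rule ccontr) (simp add: V_def)

lemma aux_neg:
  assumes "(c::'a::field) \<noteq> 0"
  shows "(\<Sum>l\<in>A. (- g l / c) * x l) * c = - (\<Sum>l\<in>A. x l * g l)"
proof -
  have "(\<Sum>l\<in>A. (- g l / c) * x l) * c = (\<Sum>l\<in>A. (- g l / c) * x l * c)" by (rule sum_distrib_right)
  also have "\<dots> = (\<Sum>l\<in>A. - (x l * g l))" using assms by (intro sum.cong) (auto simp: field_simps)
  also have "\<dots> = - (\<Sum>l\<in>A. x l * g l)" by (simp add: sum_negf)
  finally show ?thesis .
qed

lemma vert0:
  fixes F :: "(nat \<Rightarrow> nat) \<Rightarrow> 'a::field_char_0"
  assumes n: "n \<ge> 1" and lin\<mu>: "lin \<mu>" and \<mu>n: "\<mu> (ee (n - 1)) \<noteq> 0"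
    and vf: "vfree {form_eval n d F} {x \<in> V n. \<mu> x = 0}"
    and w: "w \<in> V (n - 1)" "w \<noteq> (\<lambda>_. 0)"
  defines "a0 \<equiv> (\<lambda>i. - \<mu> (ee i) / \<mu> (ee (n - 1)))"
  shows "\<exists>x t. subst_last n d F a0 (\<lambda>i. x i + t * w i) \<noteq> subst_last n d F a0 x"
proof -
  let ?F = "form_eval n d F"
  let ?m = "n - 1"
  define emb where "emb x = (\<lambda>i. if i < ?m then x i else if i = ?m then (\<Sum>l<?m. a0 l * x l) else 0)" for x :: "nat \<Rightarrow> 'a"
  have femb: "subst_last n d F a0 x = ?F (emb x)" for x
    unfolding subst_last_def by (rule PF_local[OF PF_form_eval]) (auto simp: emb_def)
  have nS: "n = Suc ?m" using n by simp
  have embV: "emb x \<in> V n" for x using n by (auto simp: emb_def V_def)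
  have \<mu>x: "\<mu> x = (\<Sum>j<?m. x j * \<mu> (ee j)) + x ?m * \<mu> (ee ?m)" if "x \<in> V n" for x
    using lin_V[OF lin\<mu> that] nS by (metis sum.lessThan_Suc)
  have \<mu>emb: "\<mu> (emb x) = 0" for x
  proof -
    have "\<mu> (emb x) = (\<Sum>j<?m. x j * \<mu> (ee j)) + (\<Sum>l<?m. a0 l * x l) * \<mu> (ee ?m)"
      using \<mu>x[OF embV] by (simp add: emb_def)
    also have "(\<Sum>l<?m. a0 l * x l) * \<mu> (ee ?m) = - (\<Sum>j<?m. x j * \<mu> (ee j))"
      unfolding a0_def by (rule aux_neg[OF \<mu>n])
    finally show ?thesis by simp
  qed
  obtain i where wi: "w i \<noteq> 0" using w(2) by auto
  have "i < ?m" using V_lt[OF w(1) wi] .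
  hence "emb w i = w i" by (simp add: emb_def)
  hence "emb w \<noteq> (\<lambda>_. 0)" using wi by (metis)
  then obtain x t where x: "x \<in> V n" "\<mu> x = 0" "?F (\<lambda>i. x i + t * emb w i) \<noteq> ?F x"
    using vf embV \<mu>emb unfolding vfree_def by blast
  have xe: "x = emb x"
  proof
    fix i
    show "x i = emb x i"
    proof (cases "i < ?m")
      case True thus ?thesis by (simp add: emb_def)
    next
      case False
      show ?thesis
      proof (cases "i = ?m")
        case True
        have "0 = (\<Sum>j<?m. x j * \<mu> (ee j)) + x ?m * \<mu> (ee ?m)" using \<mu>x[OF x(1)] x(2) by simp
        moreover have "(\<Sum>l<?m. a0 l * x l) * \<mu> (ee ?m) = - (\<Sum>j<?m. x j * \<mu> (ee j))"
          unfolding a0_def by (rule aux_neg[OF \<mu>n])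
        ultimately have "(\<Sum>l<?m. a0 l * x l) * \<mu> (ee ?m) = x ?m * \<mu> (ee ?m)"
          by (metis add.commute neg_eq_iff_add_eq_0)
        hence "x ?m = (\<Sum>l<?m. a0 l * x l)" using \<mu>n by simp
        thus ?thesis using True by (simp add: emb_def)
      next
        case False2: False
        hence "i \<ge> n" using False n by simp
        thus ?thesis using x(1) False False2 by (simp add: emb_def V_def)
      qed
    qed
  qed
  have "emb (\<lambda>i. x i + t * w i) = (\<lambda>i. emb x i + t * emb w i)"
    by (rule ext) (simp add: emb_def sum.distrib sum_distrib_left algebra_simps)
  hence "subst_last n d F a0 (\<lambda>i. x i + t * w i) = ?F (\<lambda>i. x i + t * emb w i)"
    using femb xe by (metis (no_types))
  moreover have "subst_last n d F a0 x = ?F x" using femb xe by metis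
  ultimately show ?thesis using x(3) by metis
qed

lemma mult_vec_sum:
  assumes "v \<in> carrier_vec k" "i < k"
  shows "(mat k k f *\<^sub>v v) $ i = (\<Sum>j<k. f (i, j) * v $ j)"
  using assms by (simp add: scalar_prod_def atLeast0LessThan)

theorem lemma4p5:
  fixes F :: "(nat \<Rightarrow> nat) \<Rightarrow> 'a::{alg_closed_field, field_char_0}"
    and n d :: nat
  assumes "n \<ge> 3" and "d \<ge> 2"
    and "concise n d F"
  shows "\<exists>(D::nat) (P :: (nat \<Rightarrow> nat) \<Rightarrow> 'a).
           (\<exists>\<alpha>\<in>monoms_le (n - 1) D. P \<alpha> \<noteq> 0) \<and>
           (\<forall>a. poly_eval (n - 1) D P a \<noteq> 0 \<longrightarrow> concise_fn (n - 1) d (subst_last n d F a))"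
proof -
  let ?F = "form_eval n d F"
  let ?m = "n - 1"
  have n1: "n \<ge> 1" using assms by simp
  define B where "B = (ee :: nat \<Rightarrow> nat \<Rightarrow> 'a) ` {..<n}"
  have finB: "finite B" by (simp add: B_def)
  have cardB: "card B \<le> n" unfolding B_def using card_image_le[of "{..<n}" ee] by simp
  have spnB: "spn B = V n" by (simp add: B_def spn_basis)
  have good: "good {?F}" unfolding good_def using PF_form_eval hom_form by blast
  have vfB: "vfree {?F} (spn B)" using concise_vfree[OF assms(3)] spnB by simp
  have pB: "ee ?m \<in> spn B" unfolding spnB V_def ee_def using n1 by auto
  have p0: "ee ?m \<noteq> (\<lambda>_. 0::'a)" by (auto simp: ee_def fun_eq_iff)
  obtain \<mu> where \<mu>: "lin \<mu>" "\<mu> (ee ?m) \<noteq> 0" "vfree {?F} {x \<in> V n. \<mu> x = 0}"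
    using core[OF finB cardB good vfB pB p0] spnB by auto
  define a0 where "a0 = (\<lambda>i. - \<mu> (ee i) / \<mu> (ee ?m))"
  define f where "f a = subst_last n d F a" for a
  have PFf: "PF ?m (f a)" for a using PF_subst[OF n1] by (simp add: f_def)
  have Dlin: "Dir (f a) y w = (\<Sum>j<?m. w j * Dir (f a) y (ee j))" if "w \<in> V ?m" for a y w
    using lin_V[OF lin_Dir[OF PFf] that] by simp
  have indep: "\<exists>y. Dir (f a0) y w \<noteq> 0" if wV: "w \<in> V ?m" and w0: "w \<noteq> (\<lambda>_. 0)" for w
  proof (rule ccontr)
    assume "\<not> ?thesis"
    hence "\<And>y. Dir (f a0) y w = 0" by blast
    hence c: "\<And>x t. f a0 (\<lambda>i. x i + t * w i) = f a0 x" using D_zero_const[OF PFf] by blast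
    have "\<exists>x t. subst_last n d F a0 (\<lambda>i. x i + t * w i) \<noteq> subst_last n d F a0 x"
      unfolding a0_def by (rule vert0[OF n1 \<mu>(1) \<mu>(2) \<mu>(3) wV w0])
    thus False using c by (simp add: f_def)
  qed
  have "\<exists>y. (\<Sum>j<?m. w j * Dir (f a0) y (ee j)) \<noteq> 0" if wj: "\<exists>j<?m. w j \<noteq> 0" for w
  proof -
    define w' where "w' i = (if i < ?m then w i else 0)" for i
    have w'V: "w' \<in> V ?m" by (simp add: w'_def V_def)
    have "w' \<noteq> (\<lambda>_. 0)" using wj by (auto simp: w'_def fun_eq_iff)
    then obtain y where "Dir (f a0) y w' \<noteq> 0" using indep[OF w'V] by blast
    hence "(\<Sum>j<?m. w' j * Dir (f a0) y (ee j)) \<noteq> 0" using Dlin[OF w'V] by simp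
    moreover have "(\<Sum>j<?m. w' j * Dir (f a0) y (ee j)) = (\<Sum>j<?m. w j * Dir (f a0) y (ee j))"
      by (intro sum.cong) (auto simp: w'_def)
    ultimately show ?thesis by auto
  qed
  then obtain ys where ys: "det (mat ?m ?m (\<lambda>(i,j). Dir (f a0) (ys i) (ee j))) \<noteq> 0"
    using points[of ?m "\<lambda>j y. Dir (f a0) y (ee j)"] by blast
  define \<Phi> where "\<Phi> a = det (mat ?m ?m (\<lambda>(i,j). Dir (f a) (ys i) (ee j)))" for a
  have \<Phi>eq: "\<Phi> a = (\<Sum>p\<in>{p. p permutes {0..<?m}}. of_int (sign p) * (\<Prod>i=0..<?m. Dir (f a) (ys i) (ee (p i))))" for a
  proof -
    have "\<Phi> a = (\<Sum>p\<in>{p. p permutes {0..<?m}}. of_int (sign p) * (\<Prod>i=0..<?m. mat ?m ?m (\<lambda>(i,j). Dir (f a) (ys i) (ee j)) $$ (i, p i)))"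
      unfolding \<Phi>_def by (rule det_def') simp
    also have "\<dots> = (\<Sum>p\<in>{p. p permutes {0..<?m}}. of_int (sign p) * (\<Prod>i=0..<?m. Dir (f a) (ys i) (ee (p i))))"
    proof (intro sum.cong refl arg_cong2[where f="(*)"] prod.cong)
      fix p i assume p: "p \<in> {p. p permutes {0..<?m}}" and i: "i \<in> {0..<?m}"
      have "p i \<in> {0..<?m}" using p i permutes_in_image[of p "{0..<?m}" i] by simp
      thus "mat ?m ?m (\<lambda>(i,j). Dir (f a) (ys i) (ee j)) $$ (i, p i) = Dir (f a) (ys i) (ee (p i))"
        using i by simp
    qed
    finally show ?thesis .
  qed
  have PF\<Phi>: "PF ?m \<Phi>"
    unfolding \<Phi>eq[abs_def] f_def
    by (intro PF_sum PF_mult PF_const PF_prod PF_entry[OF n1] finite_permutations) simp_all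
  obtain D0 P where DP: "\<forall>a. \<Phi> a = poly_eval ?m D0 P a" using PF_repr[OF PF\<Phi>] by blast
  have \<Phi>a0: "\<Phi> a0 \<noteq> 0" using ys by (simp add: \<Phi>_def)
  have ex: "\<exists>\<alpha>\<in>monoms_le ?m D0. P \<alpha> \<noteq> 0"
  proof (rule ccontr)
    assume "\<not> ?thesis"
    hence "poly_eval ?m D0 P a0 = 0" by (simp add: poly_eval_def)
    thus False using \<Phi>a0 DP by simp
  qed
  have conc: "concise_fn ?m d (subst_last n d F a)" if pa: "poly_eval ?m D0 P a \<noteq> 0" for a
  proof -
    have \<Phi>a: "\<Phi> a \<noteq> 0" using pa DP by simp
    show ?thesis unfolding concise_fn_def
    proof
      assume "\<exists>m<?m. \<exists>L G. \<forall>x. subst_last n d F a x = form_eval m d G (\<lambda>j. \<Sum>i<?m. L j i * x i)"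
      then obtain m L G where m: "m < ?m" and rep: "\<And>x. f a x = form_eval m d G (\<lambda>j. \<Sum>i<?m. L j i * x i)"
        by (auto simp: f_def)
      define A where "A = mat ?m ?m (\<lambda>(j,i). if j < m then L j i else (0::'a))"
      have Acar: "A \<in> carrier_mat ?m ?m" by (simp add: A_def)
      have r: "?m - 1 < ?m" using m by simp
      have "det A = (\<Sum>j<?m. A $$ (?m - 1, j) * cofactor A (?m - 1) j)"
        by (rule laplace_expansion_row[OF Acar r])
      also have "\<dots> = 0"
      proof (intro sum.neutral ballI)
        fix j assume "j \<in> {..<?m}"
        moreover have "\<not> (?m - 1 < m)" using m by simp
        ultimately show "A $$ (?m - 1, j) * cofactor A (?m - 1) j = 0" using r by (simp add: A_def)
      qed
      finally obtain v where v: "v \<in> carrier_vec ?m" "v \<noteq> 0\<^sub>v ?m" "A *\<^sub>v v = 0\<^sub>v ?m"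
        using det_0_iff_vec_prod_zero[OF Acar] by blast
      define w where "w i = (if i < ?m then v $ i else 0)" for i
      have wV: "w \<in> V ?m" by (simp add: w_def V_def)
      have w0: "w \<noteq> (\<lambda>_. 0)"
      proof
        assume "w = (\<lambda>_. 0)"
        hence wz: "\<And>i. w i = 0" by simp
        have "v = 0\<^sub>v ?m"
        proof (rule eq_vecI)
          fix i assume "i < dim_vec (0\<^sub>v ?m :: 'a vec)"
          hence "i < ?m" by simp
          thus "v $ i = 0\<^sub>v ?m $ i" using wz[of i] by (simp add: w_def)
        qed (use v(1) in simp)
        thus False using v(2) by simp
      qed
      have Lw: "(\<Sum>i<?m. L j i * w i) = 0" if j: "j < m" for j
      proof -
        have "(A *\<^sub>v v) $ j = 0" using v(3) j m by simp
        moreover have "(A *\<^sub>v v) $ j = (\<Sum>i<?m. (\<lambda>(j,i). if j < m then L j i else (0::'a)) (j, i) * v $ i)"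
          unfolding A_def by (rule mult_vec_sum[OF v(1)]) (use j m in simp)
        moreover have "\<dots> = (\<Sum>i<?m. L j i * w i)" using j by (intro sum.cong) (auto simp: w_def)
        ultimately show ?thesis by simp
      qed
      have vert: "f a (\<lambda>i. x i + t * w i) = f a x" for x t
      proof -
        have "form_eval m d G (\<lambda>j. \<Sum>i<?m. L j i * (x i + t * w i)) = form_eval m d G (\<lambda>j. \<Sum>i<?m. L j i * x i)"
        proof (rule PF_local[OF PF_form_eval])
          fix j assume "j < m"
          hence "(\<Sum>i<?m. L j i * (x i + t * w i)) = (\<Sum>i<?m. L j i * x i) + t * (\<Sum>i<?m. L j i * w i)"
            by (simp add: algebra_simps sum.distrib sum_distrib_left)
          thus "(\<Sum>i<?m. L j i * (x i + t * w i)) = (\<Sum>i<?m. L j i * x i)" using Lw[OF \<open>j < m\<close>] by simp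
        qed
        thus ?thesis using rep by simp
      qed
      have Dz: "Dir (f a) (ys i) w = 0" for i by (rule D_vertex) (rule vert)
      let ?M = "mat ?m ?m (\<lambda>(i,j). Dir (f a) (ys i) (ee j))"
      have "?M *\<^sub>v v = 0\<^sub>v ?m"
      proof (rule eq_vecI)
        fix i assume "i < dim_vec (0\<^sub>v ?m :: 'a vec)"
        hence i: "i < ?m" by simp
        have "(?M *\<^sub>v v) $ i = (\<Sum>j<?m. Dir (f a) (ys i) (ee j) * v $ j)" using mult_vec_sum[OF v(1) i] by simp
        also have "\<dots> = (\<Sum>j<?m. w j * Dir (f a) (ys i) (ee j))" by (intro sum.cong) (auto simp: w_def)
        also have "\<dots> = 0" using Dlin[OF wV, of a "ys i"] Dz by simp
        finally show "(?M *\<^sub>v v) $ i = 0\<^sub>v ?m $ i" using i by simp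
      qed simp
      hence "det ?M = 0" using det_0_iff_vec_prod_zero[of ?M ?m] v(1,2) by auto
      thus False using \<Phi>a by (simp add: \<Phi>_def)
    qed
  qed
  show ?thesis using ex conc by blast
qed

end
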